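(* For every integer $n\ge 1$, the element $g_n=s^nas^{-n}t^nat^{-2n}at^n\in G$ satisfies $d_{\mathcal A}(1,g_n)=6n$, and every $h\in G$ with $d_{\mathcal A}(1,h)>6n$ satisfies $d_{\mathcal A}(g_n,h)>n$. In particular the depth of $g_n$ with respect to $\mathcal A$ is at least $n$.
   Context: $G=\langle a,s,t \mid a^2=1,\ [a,a^t]=1,\ [s,t]=1,\ a^s=aa^t\rangle$, where $[x,y]=x^{-1}y^{-1}xy$ and $x^y=y^{-1}xy$. $\mathcal A=\{a,s,t,at,ta,ata,as,sa,asa\}$ and $d_{\mathcal A}$ is the word metric on $G$ with respect to $\mathcal A$ (lengths of words in $\mathcal A\cup\mathcal A^{-1}$). The depth of $g\in G$ is the $d_{\mathcal A}$-distance from $g$ to the complement of the closed ball $\{h: d_{\mathcal A}(1,h)\le d_{\mathcal A}(1,g)\}$. *)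

theory Defs
  imports Main
begin

text \<open>The group G = < a,s,t | a^2, [a,a^t], [s,t], a^s = a a^t > is modelled by words
  over the letters a,s,t and their inverses, modulo the congruence generated by free
  cancellation and the defining relators.\<close>

datatype gen = A | S | T

type_synonym letter = "gen \<times> bool"   \<comment> \<open>(x, False) = x, (x, True) = x^{-1}\<close>
type_synonym word = "letter list"

definition linv :: "letter \<Rightarrow> letter" where
  "linv l = (fst l, \<not> snd l)"

definition winv :: "word \<Rightarrow> word" where
  "winv w = rev (map linv w)"

definition ga :: word where "ga = [(A,False)]"
definition gs :: word where "gs = [(S,False)]"
definition gt :: word where "gt = [(T,False)]"

definition wpow :: "word \<Rightarrow> int \<Rightarrow> word" where
  "wpow w k = (if k \<ge> 0 then concat (replicate (nat k) w) else concat (replicate (nat (-k)) (winv w)))"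

definition conj :: "word \<Rightarrow> word \<Rightarrow> word" where
  "conj x y = winv y @ x @ y"
definition comm :: "word \<Rightarrow> word \<Rightarrow> word" where
  "comm x y = winv x @ winv y @ x @ y"

definition relators :: "word set" where
  "relators = { ga @ ga,
                comm ga (conj ga gt),
                comm gs gt,
                conj ga gs @ winv (ga @ conj ga gt) }"

inductive geq :: "word \<Rightarrow> word \<Rightarrow> bool" where
  geq_refl: "geq u u"
| geq_sym: "geq u v \<Longrightarrow> geq v u"
| geq_trans: "geq u v \<Longrightarrow> geq v w \<Longrightarrow> geq u w"
| geq_cancel: "geq (u @ [x, linv x] @ v) (u @ v)"
| geq_rel: "r \<in> relators \<Longrightarrow> geq (u @ r @ v) (u @ v)"

datatype agen = Ga | Gs | Gt | Gat | Gta | Gata | Gas | Gsa | Gasa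

fun agword :: "agen \<Rightarrow> word" where
  "agword Ga = ga"
| "agword Gs = gs"
| "agword Gt = gt"
| "agword Gat = ga @ gt"
| "agword Gta = gt @ ga"
| "agword Gata = ga @ gt @ ga"
| "agword Gas = ga @ gs"
| "agword Gsa = gs @ ga"
| "agword Gasa = ga @ gs @ ga"

definition evalA :: "(agen \<times> bool) list \<Rightarrow> word" where
  "evalA ws = concat (map (\<lambda>(g,b). if b then winv (agword g) else agword g) ws)"

definition dA :: "word \<Rightarrow> word \<Rightarrow> nat" where
  "dA g h = (LEAST k. \<exists>ws. length ws = k \<and> geq (evalA ws) (winv g @ h))"

definition depth :: "word \<Rightarrow> nat" where
  "depth g = (LEAST k. \<exists>h. dA [] h > dA [] g \<and> dA g h = k)"

definition gn :: "nat \<Rightarrow> word" where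
  "gn n = wpow gs (int n) @ ga @ wpow gs (- int n) @ wpow gt (int n) @ ga
          @ wpow gt (- 2 * int n) @ ga @ wpow gt (int n)"

end

theory Submission
  imports Defs
begin


lemma linv_linv[simp]: "linv (linv x) = x" by (simp add: linv_def)

lemma geq_ctx: "geq u v \<Longrightarrow> geq (p @ u @ q) (p @ v @ q)"
proof (induction rule: geq.induct)
  case (geq_refl u) then show ?case by (rule geq.geq_refl)
next
  case (geq_sym u v) from geq_sym.IH show ?case by (rule geq.geq_sym)
next
  case (geq_trans u v w) from geq_trans.IH show ?case by (rule geq.geq_trans)
next
  case (geq_cancel u x v)
  then show ?case using geq.geq_cancel[of "p @ u" x "v @ q"] by simp
next
  case (geq_rel r u v)
  then show ?case using geq.geq_rel[of r "p @ u" "v @ q"] by simp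
qed

lemma geq_app: "geq u u' \<Longrightarrow> geq v v' \<Longrightarrow> geq (u @ v) (u' @ v')"
proof -
  assume a: "geq u u'" "geq v v'"
  have "geq (u @ v) (u' @ v)" using geq_ctx[OF a(1), of "[]" v] by simp
  moreover have "geq (u' @ v) (u' @ v')" using geq_ctx[OF a(2), of u' "[]"] by simp
  ultimately show ?thesis by (rule geq_trans)
qed

lemma winv_append[simp]: "winv (u @ v) = winv v @ winv u" by (simp add: winv_def)
lemma winv_Nil[simp]: "winv [] = []" by (simp add: winv_def)
lemma winv_Cons[simp]: "winv (x # u) = winv u @ [linv x]" by (simp add: winv_def)
lemma winv_winv[simp]: "winv (winv u) = u" by (simp add: winv_def rev_map comp_def)

lemma geq_inv_cancel: "geq (winv u @ u) []"
proof (induction u)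
  case Nil then show ?case by (simp add: geq_refl)
next
  case (Cons x u)
  have "winv (x # u) @ (x # u) = winv u @ [linv x, linv (linv x)] @ u" by simp
  moreover have "geq (winv u @ [linv x, linv (linv x)] @ u) (winv u @ u)" by (rule geq_cancel)
  ultimately show ?case using Cons.IH geq.geq_trans by simp
qed

lemma geq_rel0: "r \<in> relators \<Longrightarrow> geq r []"
  using geq_rel[of r "[]" "[]"] by simp

lemma geq_winv: "geq u v \<Longrightarrow> geq (winv u) (winv v)"
proof (induction rule: geq.induct)
  case (geq_refl u) then show ?case by (rule geq.geq_refl)
next
  case (geq_sym u v) from geq_sym.IH show ?case by (rule geq.geq_sym)
next
  case (geq_trans u v w) from geq_trans.IH show ?case by (rule geq.geq_trans)
next
  case (geq_cancel u x v)
  have "winv (u @ [x, linv x] @ v) = winv v @ [linv (linv x), linv x] @ winv u" by simp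
  also have "\<dots> = winv v @ [x, linv x] @ winv u" by simp
  finally show ?case using geq.geq_cancel[of "winv v" x "winv u"] by simp
next
  case (geq_rel r u v)
  have r0: "geq r []" using geq_rel0[OF geq_rel] .
  have "geq (winv r) (winv r @ r)" using geq_app[OF geq_refl[of "winv r"] geq_sym[OF r0]] by simp
  then have "geq (winv r) []" using geq_inv_cancel[of r] by (rule geq.geq_trans)
  then have "geq (winv v @ winv r @ winv u) (winv v @ [] @ winv u)" by (rule geq_ctx)
  then show ?case by simp
qed

lemma equivp_geq: "equivp geq"
proof (rule equivpI)
  show "reflp geq" unfolding reflp_def by (blast intro: geq_refl)
  show "symp geq" unfolding symp_def by (blast intro: geq_sym)
  show "transp geq" unfolding transp_def by (blast intro: geq.geq_trans)
qed

quotient_type grp = word / geq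
  by (rule equivp_geq)

instantiation grp :: group_add
begin
lift_definition zero_grp :: grp is "[]" .
lift_definition plus_grp :: "grp \<Rightarrow> grp \<Rightarrow> grp" is "(@)" by (rule geq_app)
lift_definition uminus_grp :: "grp \<Rightarrow> grp" is winv by (rule geq_winv)
definition minus_grp :: "grp \<Rightarrow> grp \<Rightarrow> grp" where "minus_grp a b = a + - b"
instance
proof
  fix a b c :: grp
  show "a + b + c = a + (b + c)" by transfer (simp add: geq_refl)
  show "0 + a = a" by transfer (simp add: geq_refl)
  show "a + 0 = a" by transfer (simp add: geq_refl)
  show "- a + a = 0" by transfer (rule geq_inv_cancel)
  show "a + - b = a - b" by (simp add: minus_grp_def)
qed
end

lemma abs_eq_iff: "abs_grp u = abs_grp v \<longleftrightarrow> geq u v"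
  using Quotient3_rel[OF Quotient3_grp, of u v] by (simp add: geq_refl)

lemma abs_app: "abs_grp (u @ v) = abs_grp u + abs_grp v"
  by (rule plus_grp.abs_eq[symmetric])
lemma abs_nil: "abs_grp [] = 0"
  by (rule zero_grp.abs_eq[symmetric])
lemma abs_winv: "abs_grp (winv u) = - abs_grp u"
  by (rule uminus_grp.abs_eq[symmetric])



declare add_uminus_conv_diff[simp del]
lemma int_add_uminus[simp]: "(a::int) + - b = a - b" by simp
lemma grp_diff[simp]: "(a::grp) - b = a + - b" by (rule diff_conv_add_uminus)
lemma grp_minus_add[simp]: "- ((a::grp) + b) = - b + - a" by (rule minus_add)

definition A0 :: grp where "A0 = abs_grp ga"
definition S0 :: grp where "S0 = abs_grp gs"
definition T0 :: grp where "T0 = abs_grp gt"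

lemma rel_zero: "r \<in> relators \<Longrightarrow> abs_grp r = 0"
  using geq_rel0 abs_eq_iff abs_nil by metis

lemma abs_conj: "abs_grp (conj x y) = - abs_grp y + abs_grp x + abs_grp y"
  by (simp add: conj_def abs_app abs_winv add.assoc)
lemma abs_comm: "abs_grp (comm x y) = - abs_grp x + - abs_grp y + abs_grp x + abs_grp y"
  by (simp add: comm_def abs_app abs_winv add.assoc)

lemma R1: "A0 + A0 = 0"
  using rel_zero[of "ga @ ga"] by (simp add: relators_def abs_app A0_def)
lemma R2: "- A0 + - (- T0 + A0 + T0) + A0 + (- T0 + A0 + T0) = 0"
  using rel_zero[of "comm ga (conj ga gt)"] by (simp add: relators_def abs_comm abs_conj A0_def T0_def)
lemma R3: "- S0 + - T0 + S0 + T0 = 0"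
  using rel_zero[of "comm gs gt"] by (simp add: relators_def abs_comm S0_def T0_def)
lemma R4raw: "(- S0 + A0 + S0) + - (A0 + (- T0 + A0 + T0)) = 0"
  using rel_zero[of "conj ga gs @ winv (ga @ conj ga gt)"]
  by (simp add: relators_def abs_conj abs_app abs_winv A0_def S0_def T0_def add.assoc)

lemma eq_from: fixes x y :: "'a::group_add" assumes "x + - y = 0" shows "x = y"
  using assms by (metis add.right_inverse add_right_cancel)

lemma R4: "- S0 + A0 + S0 = A0 + (- T0 + A0 + T0)"
  using R4raw eq_from by blast

lemma comm_from: fixes x y :: "'a::group_add" assumes "- x + - y + x + y = 0" shows "x + y = y + x"
proof -
  have "y + x + (- x + - y + x + y) = y + x" using assms by simp
  then show ?thesis by (simp add: add.assoc)
qed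

lemma A_inv: "- A0 = A0"
  using R1 by (metis add.right_inverse add_left_cancel)

lemma ST_comm: "S0 + T0 = T0 + S0" using R3 comm_from by blast

fun npow :: "'a::group_add \<Rightarrow> nat \<Rightarrow> 'a" where
  "npow x 0 = 0"
| "npow x (Suc k) = x + npow x k"

lemma npow_comm: "npow x k + x = x + npow x k"
  by (induction k) (simp_all add: add.assoc)

lemma npow_Suc': "npow x (Suc k) = npow x k + x"
  using npow_comm[of x k] by simp

definition zpow :: "'a::group_add \<Rightarrow> int \<Rightarrow> 'a" where
  "zpow x k = (if k \<ge> 0 then npow x (nat k) else - npow x (nat (- k)))"

lemma zpow_0[simp]: "zpow x 0 = 0" by (simp add: zpow_def)

lemma zpow_succ: "zpow x (k + 1) = zpow x k + x"
proof (cases "k \<ge> 0")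
  case True
  then have "nat (k + 1) = Suc (nat k)" by simp
  then show ?thesis using True by (simp add: zpow_def npow_comm)
next
  case False
  have "nat (- k) > 0" using False by simp
  then obtain m where m: "nat (- k) = Suc m" using gr0_implies_Suc by blast
  show ?thesis
  proof (cases "k + 1 = 0")
    case True
    then have "m = 0" using m by simp
    then show ?thesis using True False m by (simp add: zpow_def)
  next
    case F2: False
    then have k1: "\<not> k + 1 \<ge> 0" "nat (- (k + 1)) = m" using False m by linarith+
    have "zpow x k = - npow x (Suc m)" using False m by (simp add: zpow_def)
    moreover have "zpow x (k + 1) = - npow x m" using k1 by (simp add: zpow_def)
    ultimately show ?thesis by (simp add: add.assoc minus_add)
  qed
qed



lemma zpow_pred: "zpow x (k - 1) = zpow x k + - x"
  using zpow_succ[of x "k - 1"] by (simp add: add.assoc)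

lemma zpow_add: "zpow x (a + b) = zpow x a + zpow x b"
proof (induction b rule: int_induct[where k=0])
  case base then show ?case by simp
next
  case (step1 i)
  have "zpow x (a + (i + 1)) = zpow x (a + i) + x" using zpow_succ[of x "a + i"] by (simp add: add.assoc)
  then show ?case using step1 zpow_succ[of x i] by (simp add: add.assoc)
next
  case (step2 i)
  have "zpow x (a + (i - 1)) = zpow x (a + i) + - x" using zpow_pred[of x "a + i"] by (simp add: algebra_simps)
  then show ?case using step2 zpow_pred[of x i] by (simp add: add.assoc)
qed

lemma zpow_comm_gen:
  fixes x y :: "'a::group_add"
  assumes "x + y = y + x" shows "x + zpow y k = zpow y k + x"
proof (induction k rule: int_induct[where k=0])
  case base then show ?case by simp
next
  case (step1 i)
  have "x + zpow y (i + 1) = (x + zpow y i) + y" by (simp add: zpow_succ add.assoc)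
  also have "\<dots> = zpow y i + (x + y)" using step1 by (simp add: add.assoc)
  also have "\<dots> = zpow y (i + 1) + x" using assms by (simp add: zpow_succ add.assoc)
  finally show ?case .
next
  case (step2 i)
  have "x + - y = - y + x"
  proof -
    have "- y + (x + y) + - y = - y + (y + x) + - y" using assms by simp
    then show ?thesis by (simp add: add.assoc)
  qed
  note nx = this
  have "x + zpow y (i - 1) = (x + zpow y i) + - y" by (simp add: zpow_pred add.assoc)
  also have "\<dots> = zpow y i + (x + - y)" using step2 by (simp add: add.assoc)
  also have "\<dots> = zpow y (i - 1) + x" using nx by (simp add: zpow_pred add.assoc)
  finally show ?case .
qed

lemma zpow_comm2:
  fixes x y :: "'a::group_add"
  assumes "x + y = y + x" shows "zpow x i + zpow y j = zpow y j + zpow x i"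
proof -
  have "y + zpow x i = zpow x i + y" using zpow_comm_gen[of y x i] assms by simp
  then show ?thesis using zpow_comm_gen[of "zpow x i" y j] by simp
qed

lemma zpow_neg: "zpow x (- k) = - zpow x k"
proof -
  have "zpow x (- k) + zpow x k = 0" using zpow_add[of x "- k" k] by simp
  then show ?thesis by (simp add: eq_neg_iff_add_eq_0)
qed

definition padd :: "int \<times> int \<Rightarrow> int \<times> int \<Rightarrow> int \<times> int" where
  "padd p q = (fst p + fst q, snd p + snd q)"

definition pos :: "int \<times> int \<Rightarrow> grp" where
  "pos p = zpow S0 (fst p) + zpow T0 (snd p)"

lemma pos_add: "pos (padd p q) = pos p + pos q"
proof -
  have c: "zpow T0 (snd p) + zpow S0 (fst q) = zpow S0 (fst q) + zpow T0 (snd p)"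
    using zpow_comm2[OF ST_comm] by simp
  have "pos (padd p q) = zpow S0 (fst p) + (zpow S0 (fst q) + zpow T0 (snd p)) + zpow T0 (snd q)"
    by (simp add: pos_def padd_def zpow_add add.assoc)
  also have "\<dots> = pos p + pos q" by (simp add: pos_def c[symmetric] add.assoc)
  finally show ?thesis .
qed

lemma pos_0[simp]: "pos (0, 0) = 0" by (simp add: pos_def)
lemma pos_neg: "- pos p = pos (- fst p, - snd p)"
proof -
  have "pos p + pos (- fst p, - snd p) = 0" using pos_add[of p "(- fst p, - snd p)"] by (simp add: padd_def)
  then show ?thesis by (simp add: neg_eq_iff_add_eq_0)
qed

definition lamp :: "int \<times> int \<Rightarrow> grp" where
  "lamp p = pos p + A0 + - pos p"

lemma lamp_shift: "pos q + lamp p + - pos q = lamp (padd q p)"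
  by (simp add: lamp_def pos_add add.assoc)

lemma conj_add: "(c::grp) + (x + y) + - c = (c + x + - c) + (c + y + - c)"
  by (simp add: add.assoc)

lemma lamp_rel: "lamp (i, j) = lamp (i + 1, j) + lamp (i + 1, j - 1)"
proof -
  have l1: "lamp (-1, 0) = - S0 + A0 + S0" by (simp add: lamp_def pos_def zpow_def add.assoc)
  have l2: "lamp (0, -1) = - T0 + A0 + T0" by (simp add: lamp_def pos_def zpow_def add.assoc)
  have l3: "lamp (0, 0) = A0" by (simp add: lamp_def)
  have b: "lamp (-1, 0) = lamp (0, 0) + lamp (0, -1)" using R4 l1 l2 l3 by simp
  have "lamp (i, j) = pos (i+1, j) + lamp (-1, 0) + - pos (i+1, j)"
    using lamp_shift[of "(i+1, j)" "(-1, 0)"] by (simp add: padd_def)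
  also have "\<dots> = (pos (i+1, j) + lamp (0, 0) + - pos (i+1, j)) + (pos (i+1, j) + lamp (0, -1) + - pos (i+1, j))"
    using b conj_add by simp
  also have "\<dots> = lamp (i + 1, j) + lamp (i + 1, j - 1)"
    by (simp add: lamp_shift padd_def)
  finally show ?thesis .
qed

lemma lamp_inv: "lamp p + lamp p = 0"
proof -
  have "lamp p + lamp p = pos p + (A0 + A0) + - pos p" by (simp add: lamp_def add.assoc)
  then show ?thesis using R1 by simp
qed

lemma lamp_comm01: "lamp (i, j) + lamp (i, j - 1) = lamp (i, j - 1) + lamp (i, j)"
proof -
  have l2: "lamp (0, -1) = - T0 + A0 + T0" by (simp add: lamp_def pos_def zpow_def add.assoc)
  have l3: "lamp (0, 0) = A0" by (simp add: lamp_def)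
  have b: "lamp (0, 0) + lamp (0, -1) = lamp (0, -1) + lamp (0, 0)"
    using comm_from[of A0 "- T0 + A0 + T0"] R2 l2 l3 by (simp add: add.assoc)
  have "lamp (i, j) + lamp (i, j - 1) = pos (i, j) + (lamp (0, 0) + lamp (0, -1)) + - pos (i, j)"
    using conj_add lamp_shift[of "(i,j)"] by (simp add: padd_def)
  also have "\<dots> = pos (i, j) + (lamp (0, -1) + lamp (0, 0)) + - pos (i, j)" using b by simp
  also have "\<dots> = lamp (i, j - 1) + lamp (i, j)"
    using conj_add lamp_shift[of "(i,j)"] by (simp add: padd_def)
  finally show ?thesis .
qed



lemma lcomm:
  fixes x y :: "'a::group_add"
  assumes "x + y = y + x" shows "x + (y + z) = y + (x + z)"
  by (simp add: add.assoc[symmetric] assms)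

lemma comm_aux:
  fixes b c d e :: "'a::group_add"
  assumes bc: "b + c = c + b" and bd: "b + d = d + b" and cd: "c + d = d + c" and ce: "c + e = e + c"
    and h: "(b + c) + (d + e) = (d + e) + (b + c)"
  shows "b + e = e + b"
proof -
  have "d + (c + (b + e)) = d + (b + (c + e))" by (simp add: lcomm[OF bc])
  also have "\<dots> = b + (d + (c + e))" by (simp add: lcomm[OF bd])
  also have "\<dots> = b + (c + (d + e))" by (simp add: lcomm[OF cd])
  also have "\<dots> = d + (e + (b + c))" using h by (simp add: add.assoc)
  also have "\<dots> = d + (e + (c + b))" by (simp add: bc)
  also have "\<dots> = d + (c + (e + b))" using lcomm[OF ce, of b] by simp
  finally show ?thesis by simp
qed

lemma col_comm_nat: "\<forall>i j. lamp (i, j) + lamp (i, j - int d) = lamp (i, j - int d) + lamp (i, j)"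
proof (induction d rule: less_induct)
  case (less d)
  show ?case
  proof (cases "d \<le> 1")
    case True
    then have "d = 0 \<or> d = 1" by auto
    then show ?thesis
    proof
      assume "d = 0" then show ?thesis by simp
    next
      assume "d = 1" then show ?thesis using lamp_comm01 by simp
    qed
  next
    case False
    define k where "k = d - 2"
    have dk: "d = Suc (Suc k)" using False by (simp add: k_def)
    show ?thesis
    proof (intro allI)
      fix i j
      define b where "b = lamp (i, j)"
      define c where "c = lamp (i, j - 1)"
      define d' where "d' = lamp (i, j - int (Suc k))"
      define e where "e = lamp (i, j - int d)"
      have IH: "\<And>m i j. m < d \<Longrightarrow> lamp (i, j) + lamp (i, j - int m) = lamp (i, j - int m) + lamp (i, j)"
        using less.IH by simp
      have bc: "b + c = c + b" using IH[of 1 i j] dk by (simp add: b_def c_def)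
      have bd: "b + d' = d' + b" using IH[of "Suc k" i j] dk by (simp add: b_def d'_def)
      have e1: "j - 1 - int k = j - int (Suc k)" by simp
      have e2: "j - 1 - int (Suc k) = j - int d" using dk by simp
      have e4: "j - int (Suc k) - 1 = j - int d" using dk by simp
      have cd: "c + d' = d' + c" using IH[of k i "j - 1"] dk unfolding e1 by (simp add: c_def d'_def)
      have ce: "c + e = e + c" using IH[of "Suc k" i "j - 1"] dk unfolding e2 by (simp add: c_def e_def)
      have r1: "lamp (i - 1, j) = b + c" using lamp_rel[of "i - 1" j] by (simp add: b_def c_def)
      have r2: "lamp (i - 1, j - int (Suc k)) = d' + e"
        using lamp_rel[of "i - 1" "j - int (Suc k)"] unfolding e4 by (simp add: d'_def e_def)
      have h: "(b + c) + (d' + e) = (d' + e) + (b + c)" using IH[of "Suc k" "i - 1" j] dk r1 r2 by simp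
      show "lamp (i, j) + lamp (i, j - int d) = lamp (i, j - int d) + lamp (i, j)"
        using comm_aux[OF bc bd cd ce h] by (simp add: b_def e_def)
    qed
  qed
qed

lemma col_comm: "lamp (i, j) + lamp (i, j') = lamp (i, j') + lamp (i, j)"
proof (cases "j' \<le> j")
  case True
  have "lamp (i, j) + lamp (i, j - (j - j')) = lamp (i, j - (j - j')) + lamp (i, j)"
    using col_comm_nat[of "nat (j - j')", rule_format, of i j] True by simp
  then show ?thesis by simp
next
  case False
  have "lamp (i, j') + lamp (i, j' - (j' - j)) = lamp (i, j' - (j' - j)) + lamp (i, j')"
    using col_comm_nat[of "nat (j' - j)", rule_format, of i j'] False by simp
  then show ?thesis by simp
qed

lemma push_nat: "\<forall>i j. \<exists>js. lamp (i, j) = sum_list (map (\<lambda>j'. lamp (i + int m, j')) js)"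
proof (induction m)
  case 0
  show ?case by (intro allI exI[of _ "[_]"]) simp
next
  case (Suc m)
  show ?case
  proof (intro allI)
    fix i j
    obtain js1 where 1: "lamp (i + 1, j) = sum_list (map (\<lambda>j'. lamp (i + 1 + int m, j')) js1)"
      using Suc by blast
    obtain js2 where 2: "lamp (i + 1, j - 1) = sum_list (map (\<lambda>j'. lamp (i + 1 + int m, j')) js2)"
      using Suc by blast
    have "lamp (i, j) = sum_list (map (\<lambda>j'. lamp (i + int (Suc m), j')) (js1 @ js2))"
      using lamp_rel[of i j] 1 2 by (simp add: algebra_simps)
    then show "\<exists>js. lamp (i, j) = sum_list (map (\<lambda>j'. lamp (i + int (Suc m), j')) js)" by blast
  qed
qed

lemma comm_one_sum:
  fixes x :: "'a::group_add"
  assumes "\<forall>y\<in>set ys. x + y = y + x" shows "x + sum_list ys = sum_list ys + x"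
  using assms
proof (induction ys)
  case Nil then show ?case by simp
next
  case (Cons y ys)
  have xy: "x + y = y + x" using Cons.prems by simp
  have ih: "x + sum_list ys = sum_list ys + x" using Cons.prems by (intro Cons.IH) simp
  have "x + sum_list (y # ys) = y + (x + sum_list ys)" using lcomm[OF xy] by simp
  also have "\<dots> = sum_list (y # ys) + x" using ih by (simp add: add.assoc)
  finally show ?case .
qed

lemma comm_sums:
  fixes xs ys :: "'a::group_add list"
  assumes "\<forall>x\<in>set xs. \<forall>y\<in>set ys. x + y = y + x" shows "sum_list xs + sum_list ys = sum_list ys + sum_list xs"
proof -
  have "\<forall>x\<in>set xs. sum_list ys + x = x + sum_list ys"
  proof
    fix x assume "x \<in> set xs"
    then have "x + sum_list ys = sum_list ys + x" using assms by (intro comm_one_sum) blast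
    then show "sum_list ys + x = x + sum_list ys" by simp
  qed
  then have "sum_list ys + sum_list xs = sum_list xs + sum_list ys" by (rule comm_one_sum)
  then show ?thesis by simp
qed

lemma lamp_comm: "lamp p + lamp q = lamp q + lamp p"
proof -
  obtain i j i' j' where pq: "p = (i, j)" "q = (i', j')" by fastforce
  define C where "C = max i i'"
  obtain js where 1: "lamp (i, j) = sum_list (map (\<lambda>j'. lamp (i + int (nat (C - i)), j')) js)"
    using push_nat by blast
  obtain js' where 2: "lamp (i', j') = sum_list (map (\<lambda>j'. lamp (i' + int (nat (C - i')), j')) js')"
    using push_nat by blast
  have a1: "lamp (i, j) = sum_list (map (\<lambda>j'. lamp (C, j')) js)" using 1 by (simp add: C_def)
  have a2: "lamp (i', j') = sum_list (map (\<lambda>j'. lamp (C, j')) js')" using 2 by (simp add: C_def)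
  have "sum_list (map (\<lambda>j'. lamp (C, j')) js) + sum_list (map (\<lambda>j'. lamp (C, j')) js') =
        sum_list (map (\<lambda>j'. lamp (C, j')) js') + sum_list (map (\<lambda>j'. lamp (C, j')) js)"
    by (rule comm_sums) (auto intro: col_comm)
  then show ?thesis using a1 a2 pq by simp
qed

lemma lamp_sum_comm: "lamp p + sum_list (map lamp xs) = sum_list (map lamp xs) + lamp p"
  by (rule comm_one_sum) (auto intro: lamp_comm)



definition lsum :: "(int \<times> int) list \<Rightarrow> grp" where
  "lsum xs = sum_list (map lamp xs)"

lemma lsum_Nil[simp]: "lsum [] = 0" by (simp add: lsum_def)
lemma lsum_Cons[simp]: "lsum (x # xs) = lamp x + lsum xs" by (simp add: lsum_def)
lemma lsum_append: "lsum (xs @ ys) = lsum xs + lsum ys" by (simp add: lsum_def)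

lemma lamp_lsum_comm: "lamp p + lsum xs = lsum xs + lamp p"
  unfolding lsum_def by (rule lamp_sum_comm)

lemma lsum_comm: "lsum xs + lsum ys = lsum ys + lsum xs"
  unfolding lsum_def by (rule comm_sums) (auto intro: lamp_comm)

definition ss :: "(int \<times> int) list \<Rightarrow> bool list \<Rightarrow> grp" where
  "ss Q bs = lsum (map fst (filter snd (zip Q bs)))"

lemma ss_Nil[simp]: "ss [] bs = 0" by (simp add: ss_def)
lemma ss_Cons[simp]: "ss (q # Q) (b # bs) = (if b then lamp q else 0) + ss Q bs"
  by (simp add: ss_def)

lemma ss_false: "ss Q (replicate (length Q) False) = 0"
  by (induction Q) simp_all

lemma ss_xor: "length bs1 = length Q \<Longrightarrow> length bs2 = length Q \<Longrightarrow>
  ss Q bs1 + ss Q bs2 = ss Q (map2 (\<noteq>) bs1 bs2)"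
proof (induction Q arbitrary: bs1 bs2)
  case Nil then show ?case by simp
next
  case (Cons q Q)
  obtain b1 r1 where 1: "bs1 = b1 # r1" using Cons.prems by (cases bs1) auto
  obtain b2 r2 where 2: "bs2 = b2 # r2" using Cons.prems by (cases bs2) auto
  have l: "length r1 = length Q" "length r2 = length Q" using Cons.prems 1 2 by auto
  have c1: "ss Q r1 + (if b2 then lamp q else 0) = (if b2 then lamp q else 0) + ss Q r1"
    by (simp add: ss_def lamp_lsum_comm)
  have c2: "(if b1 then lamp q else 0) + (if b2 then lamp q else 0) = (if b1 \<noteq> b2 then lamp q else (0::grp))"
    using lamp_inv[of q] by auto
  have "ss (q # Q) bs1 + ss (q # Q) bs2 =
        (if b1 then lamp q else 0) + ((ss Q r1 + (if b2 then lamp q else 0)) + ss Q r2)"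
    using 1 2 by (simp add: add.assoc)
  also have "\<dots> = ((if b1 then lamp q else 0) + (if b2 then lamp q else 0)) + (ss Q r1 + ss Q r2)"
    unfolding c1 by (simp add: add.assoc)
  also have "\<dots> = ss (q # Q) (map2 (\<noteq>) bs1 bs2)"
    using Cons.IH[OF l] 1 2 c2 by simp
  finally show ?case .
qed

definition spn :: "(int \<times> int) list \<Rightarrow> grp set" where
  "spn Q = {g. \<exists>bs. length bs = length Q \<and> g = ss Q bs}"

lemma spn_add: "g \<in> spn Q \<Longrightarrow> h \<in> spn Q \<Longrightarrow> g + h \<in> spn Q"
proof -
  assume "g \<in> spn Q" "h \<in> spn Q"
  then obtain b1 b2 where b: "length b1 = length Q" "g = ss Q b1" "length b2 = length Q" "h = ss Q b2"
    unfolding spn_def by blast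
  then have "g + h = ss Q (map2 (\<noteq>) b1 b2)" "length (map2 (\<noteq>) b1 b2) = length Q"
    using ss_xor by auto
  then show ?thesis unfolding spn_def by blast
qed

lemma spn_0: "0 \<in> spn Q"
proof -
  have "length (replicate (length Q) False) = length Q" "0 = ss Q (replicate (length Q) False)"
    using ss_false by simp_all
  then show ?thesis unfolding spn_def by blast
qed

lemma spn_mem: "p \<in> set Q \<Longrightarrow> lamp p \<in> spn Q"
proof (induction Q)
  case Nil then show ?case by simp
next
  case (Cons q Q)
  show ?case
  proof (cases "p = q")
    case True
    have "lamp p = ss (q # Q) (True # replicate (length Q) False)" using True ss_false by simp
    moreover have "length (True # replicate (length Q) False) = length (q # Q)" by simp
    ultimately show ?thesis unfolding spn_def by blast
  next
    case False
    then have "p \<in> set Q" using Cons.prems by simp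
    then obtain bs where "length bs = length Q" "lamp p = ss Q bs" using Cons.IH unfolding spn_def by blast
    then have "length (False # bs) = length (q # Q)" "lamp p = ss (q # Q) (False # bs)" by simp_all
    then show ?thesis unfolding spn_def by blast
  qed
qed

definition spd :: "(int \<times> int) list \<Rightarrow> int \<times> int \<Rightarrow> bool" where
  "spd Q p \<longleftrightarrow> lamp p \<in> spn Q"

lemma spd_mem: "p \<in> set Q \<Longrightarrow> spd Q p" unfolding spd_def by (rule spn_mem)

lemma tri1: "spd Q (i + 1, j) \<Longrightarrow> spd Q (i + 1, j - 1) \<Longrightarrow> spd Q (i, j)"
  unfolding spd_def using lamp_rel[of i j] spn_add by simp

lemma tri2: "spd Q (i, j) \<Longrightarrow> spd Q (i + 1, j - 1) \<Longrightarrow> spd Q (i + 1, j)"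
proof -
  assume a: "spd Q (i, j)" "spd Q (i + 1, j - 1)"
  have "lamp (i, j) + lamp (i + 1, j - 1) = lamp (i + 1, j) + (lamp (i + 1, j - 1) + lamp (i + 1, j - 1))"
    using lamp_rel[of i j] by (simp add: add.assoc)
  also have "\<dots> = lamp (i + 1, j)" using lamp_inv by simp
  finally have "lamp (i + 1, j) = lamp (i, j) + lamp (i + 1, j - 1)" by simp
  then show ?thesis using a spn_add unfolding spd_def by simp
qed

lemma tri3: "spd Q (i, j) \<Longrightarrow> spd Q (i + 1, j) \<Longrightarrow> spd Q (i + 1, j - 1)"
proof -
  assume a: "spd Q (i, j)" "spd Q (i + 1, j)"
  have "lamp (i + 1, j) + lamp (i, j) = (lamp (i + 1, j) + lamp (i + 1, j)) + lamp (i + 1, j - 1)"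
    using lamp_rel[of i j] by (simp add: add.assoc)
  also have "\<dots> = lamp (i + 1, j - 1)" using lamp_inv by simp
  finally have "lamp (i + 1, j - 1) = lamp (i + 1, j) + lamp (i, j)" by simp
  then show ?thesis using a spn_add unfolding spd_def by simp
qed

lemma lsum_spn: "\<forall>p\<in>set xs. spd Q p \<Longrightarrow> lsum xs \<in> spn Q"
proof (induction xs)
  case Nil then show ?case using spn_0 by simp
next
  case (Cons x xs) then show ?case using spn_add unfolding spd_def by simp
qed

lemma row_span:
  assumes "\<forall>i. i0 \<le> i \<and> i \<le> i1 \<longrightarrow> spd Q (i, r)"
  shows "i \<le> i1 \<Longrightarrow> j \<le> r \<Longrightarrow> i + j \<ge> i0 + r \<Longrightarrow> spd Q (i, j)"
proof (induction "nat (r - j)" arbitrary: i j)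
  case 0
  then show ?case using assms by auto
next
  case (Suc m)
  have a: "spd Q (i - 1, j + 1)" using Suc.hyps(1)[of "j + 1" "i - 1"] Suc.hyps(2) Suc.prems by simp
  have b: "spd Q (i, j + 1)" using Suc.hyps(1)[of "j + 1" i] Suc.hyps(2) Suc.prems by simp
  show ?case using tri3[of Q "i - 1" "j + 1"] a b by simp
qed

lemma col_span:
  assumes "\<forall>j. j0 \<le> j \<and> j \<le> j1 \<longrightarrow> spd Q (c, j)"
  shows "i \<le> c \<Longrightarrow> j \<le> j1 \<Longrightarrow> i + j \<ge> c + j0 \<Longrightarrow> spd Q (i, j)"
proof (induction "nat (c - i)" arbitrary: i j)
  case 0
  then show ?case using assms by auto
next
  case (Suc m)
  have a: "spd Q (i + 1, j)" using Suc.hyps(1)[of "i + 1" j] Suc.hyps(2) Suc.prems by simp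
  have b: "spd Q (i + 1, j - 1)" using Suc.hyps(1)[of "i + 1" "j - 1"] Suc.hyps(2) Suc.prems by simp
  show ?case using tri1 a b by simp
qed

lemma hyp_span:
  assumes "\<forall>i. g - b \<le> i \<and> i \<le> a \<longrightarrow> spd Q (i, g - i)"
  shows "i \<le> a \<Longrightarrow> j \<le> b \<Longrightarrow> i + j \<ge> g \<Longrightarrow> spd Q (i, j)"
proof (induction "nat (i + j - g)" arbitrary: i j)
  case 0
  then have "j = g - i" "g - b \<le> i" by auto
  then show ?case using assms 0 by auto
next
  case (Suc m)
  have a: "spd Q (i - 1, j)" using Suc.hyps(1)[of "i - 1" j] Suc.hyps(2) Suc.prems by simp
  have b: "spd Q (i, j - 1)" using Suc.hyps(1)[of i "j - 1"] Suc.hyps(2) Suc.prems by simp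
  show ?case using tri2[of Q "i - 1" j] a b by simp
qed



fun dlt :: "letter \<Rightarrow> int \<times> int" where
  "dlt (S, b) = (if b then -1 else 1, 0)"
| "dlt (T, b) = (0, if b then -1 else 1)"
| "dlt (A, b) = (0, 0)"

definition isST :: "letter \<Rightarrow> bool" where "isST l \<longleftrightarrow> fst l \<noteq> A"

fun walkpos :: "int \<times> int \<Rightarrow> letter list \<Rightarrow> (int \<times> int) list" where
  "walkpos q [] = [q]"
| "walkpos q (d # ds) = q # walkpos (padd q (dlt d)) ds"

fun wend :: "int \<times> int \<Rightarrow> letter list \<Rightarrow> int \<times> int" where
  "wend q [] = q"
| "wend q (d # ds) = wend (padd q (dlt d)) ds"

definition dval :: "letter \<Rightarrow> grp" where "dval d = abs_grp [d]"

lemma npow1: "npow x 1 = x" by simp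

lemma pos_step: "isST d \<Longrightarrow> pos q + dval d = pos (padd q (dlt d))"
proof -
  assume "isST d"
  then obtain g b where d: "d = (g, b)" "g = S \<or> g = T" unfolding isST_def by (cases d; cases "fst d") auto
  have gsv: "abs_grp [(S, False)] = S0" "abs_grp [(T, False)] = T0" by (simp_all add: S0_def T0_def gs_def gt_def)
  have gsi: "abs_grp [(S, True)] = - S0" "abs_grp [(T, True)] = - T0"
    using abs_winv[of gs] abs_winv[of gt] by (simp_all add: S0_def T0_def gs_def gt_def winv_def linv_def)
  have "dval d = pos (dlt d)"
    using d gsv gsi by (auto simp: dval_def pos_def zpow_def)
  then show ?thesis by (simp add: pos_add)
qed

definition Av :: "bool \<Rightarrow> grp" where "Av b = (if b then A0 else 0)"

fun seqval :: "bool list \<Rightarrow> letter list \<Rightarrow> grp" where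
  "seqval (b # bs) (d # ds) = Av b + dval d + seqval bs ds"
| "seqval [b] [] = Av b"
| "seqval _ _ = 0"

lemma pos_Av: "pos q + Av b = (if b then lamp q else 0) + pos q"
  by (simp add: Av_def lamp_def add.assoc)

lemma walk_val: "length bs = Suc (length ds) \<Longrightarrow> \<forall>d\<in>set ds. isST d \<Longrightarrow>
  pos q + seqval bs ds = ss (walkpos q ds) bs + pos (wend q ds)"
proof (induction ds arbitrary: q bs)
  case Nil
  then obtain b where "bs = [b]" by (cases bs) auto
  then show ?case using pos_Av[of q b] by simp
next
  case (Cons d ds)
  obtain b bs' where b: "bs = b # bs'" using Cons.prems by (cases bs) auto
  have l: "length bs' = Suc (length ds)" using Cons.prems b by simp
  have st: "isST d" "\<forall>d\<in>set ds. isST d" using Cons.prems by auto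
  have "pos q + seqval bs (d # ds) = (pos q + Av b) + dval d + seqval bs' ds" using b by (simp add: add.assoc)
  also have "\<dots> = (if b then lamp q else 0) + ((pos q + dval d) + seqval bs' ds)" by (simp add: pos_Av add.assoc)
  also have "\<dots> = (if b then lamp q else 0) + (pos (padd q (dlt d)) + seqval bs' ds)" using pos_step[OF st(1)] by simp
  also have "\<dots> = (if b then lamp q else 0) + (ss (walkpos (padd q (dlt d)) ds) bs' + pos (wend (padd q (dlt d)) ds))"
    using Cons.IH[OF l st(2)] by simp
  also have "\<dots> = ss (walkpos q (d # ds)) bs + pos (wend q (d # ds))" using b by (simp add: add.assoc)
  finally show ?case .
qed

definition genv :: "agen \<times> bool \<Rightarrow> grp" where
  "genv x = abs_grp (evalA [x])"

lemma gv_Cons: "abs_grp (evalA (x # ws)) = genv x + abs_grp (evalA ws)"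
  by (simp add: genv_def evalA_def abs_app)
lemma gv_Nil: "abs_grp (evalA []) = 0"
  by (simp add: evalA_def abs_nil)

fun Lgen :: "bool \<Rightarrow> letter \<Rightarrow> bool \<Rightarrow> agen \<times> bool" where
  "Lgen b0 (S, iv) b1 = ((if b0 then (if b1 then Gasa else (if iv then Gsa else Gas))
                           else (if b1 then (if iv then Gas else Gsa) else Gs)), iv)"
| "Lgen b0 (T, iv) b1 = ((if b0 then (if b1 then Gata else (if iv then Gta else Gat))
                           else (if b1 then (if iv then Gat else Gta) else Gt)), iv)"
| "Lgen b0 (A, iv) b1 = (Ga, False)"

lemma absA: "abs_grp ga = A0" by (simp add: A0_def)
lemma absS: "abs_grp gs = S0" by (simp add: S0_def)
lemma absT: "abs_grp gt = T0" by (simp add: T0_def)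

lemma dvals: "dval (S, False) = S0" "dval (S, True) = - S0" "dval (T, False) = T0" "dval (T, True) = - T0"
  using abs_winv[of gs] abs_winv[of gt]
  by (simp_all add: dval_def S0_def T0_def gs_def gt_def winv_def linv_def)

lemma Lgen_val: "isST d \<Longrightarrow> genv (Lgen b0 d b1) = Av b0 + dval d + Av b1"
proof -
  assume "isST d"
  then obtain g iv where d: "d = (g, iv)" "g = S \<or> g = T" unfolding isST_def by (cases d; cases "fst d") auto
  show ?thesis
    using d A_inv
    by (cases b0; cases b1; cases iv; auto simp: genv_def evalA_def abs_app abs_winv absA absS absT Av_def dvals add.assoc)
qed

fun rword :: "bool \<Rightarrow> letter list \<Rightarrow> bool list \<Rightarrow> (agen \<times> bool) list" where
  "rword b0 (d # ds) (b1 # bs) = Lgen b0 d b1 # rword False ds bs"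
| "rword b0 _ _ = []"

lemma rword_len: "length bs = length ds \<Longrightarrow> length (rword b0 ds bs) = length ds"
  by (induction b0 ds bs rule: rword.induct) auto

lemma seqval_split: "length bs = length ds \<Longrightarrow> seqval (b # bs) ds = Av b + seqval (False # bs) ds"
  by (cases ds; cases bs) (auto simp: Av_def add.assoc)

lemma rword_val: "length bs = length ds \<Longrightarrow> \<forall>d\<in>set ds. isST d \<Longrightarrow> ds \<noteq> [] \<or> \<not> b0 \<Longrightarrow>
  abs_grp (evalA (rword b0 ds bs)) = seqval (b0 # bs) ds"
proof (induction b0 ds bs rule: rword.induct)
  case (1 b0 d ds b1 bs)
  have st: "isST d" using "1.prems" by simp
  have "abs_grp (evalA (rword b0 (d # ds) (b1 # bs))) = genv (Lgen b0 d b1) + seqval (False # bs) ds"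
    using "1.IH" "1.prems" by (simp add: gv_Cons)
  also have "\<dots> = Av b0 + dval d + (Av b1 + seqval (False # bs) ds)" using Lgen_val[OF st] by (simp add: add.assoc)
  also have "\<dots> = seqval (b0 # b1 # bs) (d # ds)" using seqval_split[of bs ds b1] "1.prems" by (simp add: add.assoc)
  finally show ?case .
qed (auto simp: gv_Nil Av_def)



fun decg :: "agen \<Rightarrow> bool \<times> gen \<times> bool" where
  "decg Gs = (False, S, False)" | "decg Gt = (False, T, False)"
| "decg Gat = (True, T, False)" | "decg Gta = (False, T, True)" | "decg Gata = (True, T, True)"
| "decg Gas = (True, S, False)" | "decg Gsa = (False, S, True)" | "decg Gasa = (True, S, True)"
| "decg Ga = (False, S, False)"

lemma Lgen_surj: "g \<noteq> Ga \<Longrightarrow> \<exists>b0 d b1. isST d \<and> Lgen b0 d b1 = (g, b)"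
proof -
  assume g: "g \<noteq> Ga"
  obtain p h q where dq: "decg g = (p, h, q)" by (cases "decg g") auto
  have "isST (h, b)" using dq g by (cases g) (auto simp: isST_def)
  moreover have "Lgen (if b then q else p) (h, b) (if b then p else q) = (g, b)"
    using dq g by (cases g; cases b) auto
  ultimately show ?thesis by blast
qed

definition nrm :: "int \<times> int \<Rightarrow> int" where "nrm p = \<bar>fst p\<bar> + \<bar>snd p\<bar>"

lemma nrm_padd: "nrm (padd a b) \<le> nrm a + nrm b"
  by (simp add: nrm_def padd_def abs_triangle_ineq)

lemma nrm_dlt: "nrm (dlt d) \<le> 1"
  by (cases d; cases "fst d") (auto simp: nrm_def)

lemma pos_lamp: "pos d + lamp p = lamp (padd d p) + pos d"
proof -
  have "pos d + lamp p = (pos d + lamp p + - pos d) + pos d" by (simp add: add.assoc)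
  then show ?thesis by (simp add: lamp_shift)
qed

lemma pos_lsum: "pos d + lsum P = lsum (map (padd d) P) + pos d"
proof (induction P)
  case Nil then show ?case by simp
next
  case (Cons p P)
  have "pos d + lsum (p # P) = (pos d + lamp p) + lsum P" by (simp add: add.assoc)
  also have "\<dots> = lamp (padd d p) + (pos d + lsum P)" by (simp add: pos_lamp add.assoc)
  also have "\<dots> = lsum (map (padd d) (p # P)) + pos d" using Cons by (simp add: add.assoc)
  finally show ?case .
qed

lemma ss_lsum: "\<exists>P. ss Q bs = lsum P \<and> set P \<subseteq> set Q"
  unfolding ss_def by (intro exI[of _ "map fst (filter snd (zip Q bs))"]) (auto dest: set_zip_leftD)

lemma genv_form: "\<exists>P e. genv x = lsum P + pos e \<and> (\<forall>p\<in>set P. nrm p \<le> 1) \<and> nrm e \<le> 1"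
proof -
  obtain g b where x: "x = (g, b)" by fastforce
  show ?thesis
  proof (cases "g = Ga")
    case True
    have "genv x = lamp (0, 0)" using x True A_inv by (cases b) (auto simp: genv_def evalA_def abs_winv absA lamp_def)
    then have "genv x = lsum [(0,0)] + pos (0, 0)" by simp
    then show ?thesis by (fastforce simp: nrm_def)
  next
    case False
    then obtain b0 d b1 where d: "isST d" "Lgen b0 d b1 = x" using Lgen_surj x by blast
    have l: "pos (0,0) + seqval [b0, b1] [d] = ss (walkpos (0,0) [d]) [b0, b1] + pos (wend (0,0) [d])"
      using walk_val[of "[b0, b1]" "[d]" "(0,0)"] d by simp
    have "genv x = seqval [b0, b1] [d]" using Lgen_val[OF d(1), of b0 b1] unfolding d(2) by (simp add: add.assoc)
    then have gx: "genv x = ss [(0,0), dlt d] [b0, b1] + pos (dlt d)" using l by (simp add: padd_def)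
    obtain P where P: "ss [(0,0), dlt d] [b0, b1] = lsum P" "set P \<subseteq> {(0,0), dlt d}"
      using ss_lsum[of "[(0,0), dlt d]" "[b0, b1]"] by auto
    have "\<forall>p\<in>set P. nrm p \<le> 1"
    proof
      fix p assume "p \<in> set P"
      then have "p = (0,0) \<or> p = dlt d" using P(2) by auto
      then show "nrm p \<le> 1" using nrm_dlt[of d] by (auto simp: nrm_def)
    qed
    moreover have "genv x = lsum P + pos (dlt d)" using gx P(1) by simp
    ultimately show ?thesis using nrm_dlt[of d] by blast
  qed
qed

lemma gv_form: "\<exists>P e. abs_grp (evalA ws) = lsum P + pos e \<and> (\<forall>p\<in>set P. nrm p \<le> int (length ws)) \<and> nrm e \<le> int (length ws)"
proof (induction ws)
  case Nil
  have "abs_grp (evalA []) = lsum [] + pos (0, 0)" by (simp add: gv_Nil)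
  then show ?case by (fastforce simp: nrm_def)
next
  case (Cons x ws)
  obtain P e where IH: "abs_grp (evalA ws) = lsum P + pos e" "\<forall>p\<in>set P. nrm p \<le> int (length ws)" "nrm e \<le> int (length ws)"
    using Cons.IH by blast
  obtain Px d where X: "genv x = lsum Px + pos d" "\<forall>p\<in>set Px. nrm p \<le> 1" "nrm d \<le> 1"
    using genv_form by blast
  have "abs_grp (evalA (x # ws)) = lsum Px + ((pos d + lsum P) + pos e)" using IH X by (simp add: gv_Cons add.assoc)
  also have "\<dots> = lsum (Px @ map (padd d) P) + pos (padd d e)" by (simp add: pos_lsum pos_add lsum_append add.assoc)
  finally have eq: "abs_grp (evalA (x # ws)) = lsum (Px @ map (padd d) P) + pos (padd d e)" .
  have "\<forall>p\<in>set (Px @ map (padd d) P). nrm p \<le> int (length (x # ws))"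
  proof
    fix p assume "p \<in> set (Px @ map (padd d) P)"
    then have "p \<in> set Px \<or> p \<in> set (map (padd d) P)" by simp
    then show "nrm p \<le> int (length (x # ws))"
    proof (elim disjE)
      assume "p \<in> set Px" then show ?thesis using X(2) by fastforce
    next
      assume "p \<in> set (map (padd d) P)"
      then obtain p' where "p' \<in> set P" "p = padd d p'" by auto
      then show ?thesis using nrm_padd[of d p'] X(3) IH(2) by fastforce
    qed
  qed
  moreover have "nrm (padd d e) \<le> int (length (x # ws))" using nrm_padd[of d e] X(3) IH(3) by simp
  ultimately show ?case using eq by blast
qed

lemma npow_neg: "npow (- x) m = - npow x m"
  by (induction m) (simp_all add: minus_add npow_comm[symmetric])

lemma abs_npow: "abs_grp (concat (replicate m w)) = npow (abs_grp w) m"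
  by (induction m) (simp_all add: abs_app abs_nil)

lemma abs_wpow: "abs_grp (wpow w k) = zpow (abs_grp w) k"
  by (simp add: wpow_def zpow_def abs_npow abs_winv npow_neg)

lemma gn_val: "abs_grp (gn n) = lsum [(int n, 0), (0, int n), (0, - int n)]"
proof -
  have t2: "zpow T0 (- 2 * int n) = zpow T0 (- int n) + zpow T0 (- int n)"
    using zpow_add[of T0 "- int n" "- int n"] by simp
  have t3: "zpow T0 (- (2 * int n)) = zpow T0 (- int n) + zpow T0 (- int n)"
    using zpow_add[of T0 "- int n" "- int n"] by simp
  have "abs_grp (gn n) = zpow S0 (int n) + A0 + zpow S0 (- int n) + (zpow T0 (int n) + A0 + zpow T0 (- int n))
      + (zpow T0 (- int n) + A0 + zpow T0 (int n))"
    by (simp add: gn_def abs_app abs_wpow absA absS absT t2 t3 add.assoc)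
  also have "\<dots> = lsum [(int n, 0), (0, int n), (0, - int n)]"
    by (simp add: lamp_def pos_def zpow_neg add.assoc)
  finally show ?thesis .
qed



lemma walkpos_hd: "q \<in> set (walkpos q ds)" by (cases ds) auto

lemma walkpos_append: "set (walkpos q (xs @ ys)) = set (walkpos q xs) \<union> set (walkpos (wend q xs) ys)"
  by (induction xs arbitrary: q) (auto simp: walkpos_hd)

lemma wend_append: "wend q (xs @ ys) = wend (wend q xs) ys"
  by (induction xs arbitrary: q) auto

lemma wend_rep: "wend q (replicate m d) = (fst q + int m * fst (dlt d), snd q + int m * snd (dlt d))"
  by (induction m arbitrary: q) (auto simp: padd_def algebra_simps)

lemma in_rep: "m' \<le> m \<Longrightarrow> p = (fst q + int m' * fst (dlt d), snd q + int m' * snd (dlt d)) \<Longrightarrow>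
   p \<in> set (walkpos q (replicate m d))"
proof (induction m arbitrary: q m')
  case 0 then show ?case by simp
next
  case (Suc m)
  show ?case
  proof (cases m')
    case 0 then show ?thesis using Suc.prems by simp
  next
    case (Suc k)
    have "p = (fst (padd q (dlt d)) + int k * fst (dlt d), snd (padd q (dlt d)) + int k * snd (dlt d))"
      using Suc.prems Suc by (simp add: padd_def algebra_simps)
    then have "p \<in> set (walkpos (padd q (dlt d)) (replicate m d))" using Suc.IH[of k] Suc.prems Suc by simp
    then show ?thesis by simp
  qed
qed

lemma walkpos_len: "length (walkpos q ds) = Suc (length ds)"
  by (induction ds arbitrary: q) auto

abbreviation "R \<equiv> (S, False)"
abbreviation "L \<equiv> (S, True)"
abbreviation "U \<equiv> (T, False)"
abbreviation "D \<equiv> (T, True)"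

definition goodroute :: "nat \<Rightarrow> int \<times> int \<Rightarrow> letter list \<Rightarrow> bool" where
  "goodroute n e ds \<longleftrightarrow> (\<forall>d\<in>set ds. isST d) \<and> length ds \<le> 6 * n \<and> wend (0,0) ds = e \<and> ds \<noteq> [] \<and>
     (\<forall>i. - 2 * int n \<le> i \<and> i \<le> int n \<longrightarrow> spd (walkpos (0,0) ds) (i, - int n - i))"

lemma routeA:
  assumes n: "n \<ge> 1" and e: "nrm e \<le> int n" and le: "fst e \<le> snd e"
  shows "\<exists>ds. goodroute n e ds"
proof -
  obtain e1 e2 where ee: "e = (e1, e2)" by fastforce
  have b: "\<bar>e1\<bar> + \<bar>e2\<bar> \<le> int n" "e1 \<le> e2" using e le ee by (auto simp: nrm_def)
  define X1 where "X1 = replicate n R"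
  define X2 where "X2 = replicate (2 * n) L"
  define X3 where "X3 = replicate n U"
  define X4 where "X4 = replicate (nat (e1 + int n)) R @ replicate (nat (int n - e2)) D"
  define ds where "ds = X1 @ X2 @ X3 @ X4"
  define Q where "Q = walkpos (0,0) ds"
  have w1: "wend (0,0) X1 = (int n, 0)" by (simp add: X1_def wend_rep)
  have w2: "wend (int n, 0) X2 = (- int n, 0)" by (simp add: X2_def wend_rep)
  have w3: "wend (- int n, 0) X3 = (- int n, int n)" by (simp add: X3_def wend_rep)
  have bb: "0 \<le> e1 + int n" "e2 \<le> int n" using b by arith+
  have w4: "wend (- int n, int n) X4 = (e1, e2)" using bb by (simp add: X4_def wend_rep wend_append)
  have setQ: "set (walkpos (int n, 0) X2) \<subseteq> set Q" "set (walkpos (- int n, 0) X3) \<subseteq> set Q"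
    unfolding Q_def ds_def using w1 w2 by (auto simp: walkpos_append wend_append)
  have row: "\<forall>i. - int n \<le> i \<and> i \<le> int n \<longrightarrow> spd Q (i, 0)"
  proof (intro allI impI)
    fix i assume i: "- int n \<le> i \<and> i \<le> int n"
    have "(i, 0) \<in> set (walkpos (int n, 0) X2)"
      unfolding X2_def by (rule in_rep[of "nat (int n - i)"]) (use i in auto)
    then show "spd Q (i, 0)" using setQ spd_mem by blast
  qed
  have col: "\<forall>j. 0 \<le> j \<and> j \<le> int n \<longrightarrow> spd Q (- int n, j)"
  proof (intro allI impI)
    fix j assume j: "0 \<le> j \<and> j \<le> int n"
    have "(- int n, j) \<in> set (walkpos (- int n, 0) X3)"
      unfolding X3_def by (rule in_rep[of "nat j"]) (use j in auto)
    then show "spd Q (- int n, j)" using setQ spd_mem by blast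
  qed
  have hyp: "\<forall>i. - 2 * int n \<le> i \<and> i \<le> int n \<longrightarrow> spd Q (i, - int n - i)"
  proof (intro allI impI)
    fix i assume i: "- 2 * int n \<le> i \<and> i \<le> int n"
    show "spd Q (i, - int n - i)"
    proof (cases "i \<ge> - int n")
      case True
      show ?thesis by (rule row_span[OF row]) (use i True in auto)
    next
      case False
      show ?thesis by (rule col_span[OF col]) (use i False in auto)
    qed
  qed
  have "length ds = 6 * n + nat (e1 + int n) + nat (int n - e2) - 2 * n"
    by (simp add: ds_def X1_def X2_def X3_def X4_def)
  then have len: "length ds \<le> 6 * n" using b by auto
  have st: "\<forall>d\<in>set ds. isST d" by (auto simp: ds_def X1_def X2_def X3_def X4_def isST_def)
  have we: "wend (0,0) ds = e" using w1 w2 w3 w4 ee by (simp add: ds_def wend_append)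
  have ne: "ds \<noteq> []" using n by (simp add: ds_def X1_def)
  show ?thesis using hyp len st we ne unfolding goodroute_def Q_def by blast
qed

lemma routeB:
  assumes n: "n \<ge> 1" and e: "nrm e \<le> int n" and le: "snd e \<le> fst e"
  shows "\<exists>ds. goodroute n e ds"
proof -
  obtain e1 e2 where ee: "e = (e1, e2)" by fastforce
  have b: "\<bar>e1\<bar> + \<bar>e2\<bar> \<le> int n" "e2 \<le> e1" using e le ee by (auto simp: nrm_def)
  define X1 where "X1 = replicate n U"
  define X2 where "X2 = replicate (2 * n) D"
  define X3 where "X3 = replicate n R"
  define X4 where "X4 = replicate (nat (int n - e1)) L @ replicate (nat (e2 + int n)) U"
  define ds where "ds = X1 @ X2 @ X3 @ X4"
  define Q where "Q = walkpos (0,0) ds"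
  have w1: "wend (0,0) X1 = (0, int n)" by (simp add: X1_def wend_rep)
  have w2: "wend (0, int n) X2 = (0, - int n)" by (simp add: X2_def wend_rep)
  have w3: "wend (0, - int n) X3 = (int n, - int n)" by (simp add: X3_def wend_rep)
  have bb: "e1 \<le> int n" "0 \<le> e2 + int n" using b by arith+
  have w4: "wend (int n, - int n) X4 = (e1, e2)" using bb by (simp add: X4_def wend_rep wend_append)
  have setQ: "set (walkpos (0, int n) X2) \<subseteq> set Q" "set (walkpos (0, - int n) X3) \<subseteq> set Q"
    unfolding Q_def ds_def using w1 w2 by (auto simp: walkpos_append wend_append)
  have col: "\<forall>j. - int n \<le> j \<and> j \<le> int n \<longrightarrow> spd Q (0, j)"
  proof (intro allI impI)
    fix j assume j: "- int n \<le> j \<and> j \<le> int n"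
    have "(0, j) \<in> set (walkpos (0, int n) X2)"
      unfolding X2_def by (rule in_rep[of "nat (int n - j)"]) (use j in auto)
    then show "spd Q (0, j)" using setQ spd_mem by blast
  qed
  have row: "\<forall>i. 0 \<le> i \<and> i \<le> int n \<longrightarrow> spd Q (i, - int n)"
  proof (intro allI impI)
    fix i assume i: "0 \<le> i \<and> i \<le> int n"
    have "(i, - int n) \<in> set (walkpos (0, - int n) X3)"
      unfolding X3_def by (rule in_rep[of "nat i"]) (use i in auto)
    then show "spd Q (i, - int n)" using setQ spd_mem by blast
  qed
  have hyp: "\<forall>i. - 2 * int n \<le> i \<and> i \<le> int n \<longrightarrow> spd Q (i, - int n - i)"
  proof (intro allI impI)
    fix i assume i: "- 2 * int n \<le> i \<and> i \<le> int n"
    show "spd Q (i, - int n - i)"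
    proof (cases "i \<ge> 0")
      case True
      show ?thesis by (rule row_span[OF row]) (use i True in auto)
    next
      case False
      show ?thesis by (rule col_span[OF col]) (use i False in auto)
    qed
  qed
  have "length ds = 6 * n + nat (int n - e1) + nat (e2 + int n) - 2 * n"
    by (simp add: ds_def X1_def X2_def X3_def X4_def)
  then have len: "length ds \<le> 6 * n" using b by auto
  have st: "\<forall>d\<in>set ds. isST d" by (auto simp: ds_def X1_def X2_def X3_def X4_def isST_def)
  have we: "wend (0,0) ds = e" using w1 w2 w3 w4 ee by (simp add: ds_def wend_append)
  have ne: "ds \<noteq> []" using n by (simp add: ds_def X1_def)
  show ?thesis using hyp len st we ne unfolding goodroute_def Q_def by blast
qed

lemma upper:
  assumes n: "n \<ge> 1" and w: "length ws \<le> n"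
  shows "\<exists>ws'. length ws' \<le> 6 * n \<and> abs_grp (evalA ws') = abs_grp (gn n) + abs_grp (evalA ws)"
proof -
  obtain P e where Pe: "abs_grp (evalA ws) = lsum P + pos e" "\<forall>p\<in>set P. nrm p \<le> int (length ws)"
    "nrm e \<le> int (length ws)" using gv_form by blast
  have en: "nrm e \<le> int n" using Pe(3) w by simp
  obtain ds where ds: "goodroute n e ds"
    using routeA[OF n en] routeB[OF n en] by (cases "fst e \<le> snd e") auto
  define Q where "Q = walkpos (0,0) ds"
  define G where "G = [(int n, 0), (0, int n), (0, - int n)]"
  have hyp: "\<forall>i. - int n - int n \<le> i \<and> i \<le> int n \<longrightarrow> spd Q (i, - int n - i)"
    using ds unfolding goodroute_def Q_def by auto
  have T: "\<And>p. fst p \<le> int n \<Longrightarrow> snd p \<le> int n \<Longrightarrow> fst p + snd p \<ge> - int n \<Longrightarrow> spd Q p"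
  proof -
    fix p :: "int \<times> int"
    assume "fst p \<le> int n" "snd p \<le> int n" "fst p + snd p \<ge> - int n"
    then have "spd Q (fst p, snd p)" by (intro hyp_span[OF hyp]) auto
    then show "spd Q p" by simp
  qed
  have allsp: "\<forall>p\<in>set (G @ P). spd Q p"
  proof
    fix p assume "p \<in> set (G @ P)"
    then have "p \<in> set G \<or> p \<in> set P" by simp
    then show "spd Q p"
    proof (elim disjE)
      assume "p \<in> set G" then show ?thesis using T by (auto simp: G_def)
    next
      assume "p \<in> set P"
      then have "nrm p \<le> int n" using Pe(2) w by fastforce
      then show ?thesis by (intro T) (auto simp: nrm_def)
    qed
  qed
  then have "lsum (G @ P) \<in> spn Q" by (rule lsum_spn)
  then obtain bs where bs: "length bs = length Q" "lsum (G @ P) = ss Q bs" unfolding spn_def by blast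
  have lQ: "length Q = Suc (length ds)" by (simp add: Q_def walkpos_len)
  then obtain b0 bs' where b0: "bs = b0 # bs'" using bs(1) by (cases bs) auto
  have lb: "length bs' = length ds" using bs(1) lQ b0 by simp
  have st: "\<forall>d\<in>set ds. isST d" "ds \<noteq> []" "wend (0,0) ds = e" "length ds \<le> 6 * n"
    using ds unfolding goodroute_def by auto
  have "abs_grp (evalA (rword b0 ds bs')) = seqval bs ds"
    using rword_val[OF lb st(1)] st(2) b0 by simp
  also have "\<dots> = pos (0,0) + seqval bs ds" by simp
  also have "\<dots> = ss Q bs + pos e" using walk_val[of bs ds "(0,0)"] bs(1) lQ st by (simp add: Q_def)
  also have "\<dots> = lsum G + (lsum P + pos e)" unfolding bs(2)[symmetric] lsum_append by (simp add: add.assoc)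
  also have "\<dots> = abs_grp (gn n) + abs_grp (evalA ws)" using gn_val Pe(1) by (simp add: G_def)
  finally have "abs_grp (evalA (rword b0 ds bs')) = abs_grp (gn n) + abs_grp (evalA ws)" .
  moreover have "length (rword b0 ds bs') \<le> 6 * n" using rword_len[OF lb, of b0] st(4) by simp
  ultimately show ?thesis by blast
qed



definition cb :: "int \<Rightarrow> int \<Rightarrow> bool" where
  "cb i m \<longleftrightarrow> m \<ge> 0 \<and> (if i \<ge> 1 then odd (nat (i + m - 1) choose nat m) else odd (nat (- i) choose nat m))"

lemma cb_rec: "cb (i - 1) m = (cb i m \<noteq> cb i (m - 1))"
proof (cases "m < 0")
  case True then show ?thesis by (simp add: cb_def)
next
  case False
  show ?thesis
  proof (cases "m = 0")
    case True then show ?thesis by (simp add: cb_def)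
  next
    case F2: False
    define k where "k = nat (m - 1)"
    have k: "nat m = Suc k" using False F2 by (simp add: k_def)
    consider "i \<ge> 2" | "i = 1" | "i \<le> 0" by linarith
    then show ?thesis
    proof cases
      case 1
      define N where "N = nat (i + m - 2)"
      have a: "nat (i - 1 + m - 1) = N" "nat (i + m - 1) = Suc N" "nat (i + (m - 1) - 1) = N"
        using 1 False F2 by (simp_all add: N_def)
      have "Suc N choose Suc k = (N choose k) + (N choose Suc k)" by simp
      then show ?thesis using 1 False F2 a k by (auto simp: cb_def k_def)
    next
      case 2
      have a: "nat (i + m - 1) = Suc k" "nat (i + (m - 1) - 1) = k" using 2 k by simp_all
      show ?thesis using 2 False F2 a k by (simp add: cb_def k_def)
    next
      case 3
      define N where "N = nat (- i)"
      have a: "nat (- (i - 1)) = Suc N" using 3 by (simp add: N_def)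
      have "Suc N choose Suc k = (N choose k) + (N choose Suc k)" by simp
      then show ?thesis using 3 False F2 a k by (auto simp: cb_def k_def N_def)
    qed
  qed
qed

definition lamrel :: "(int \<Rightarrow> int \<Rightarrow> int \<Rightarrow> bool) \<Rightarrow> bool" where
  "lamrel lam \<longleftrightarrow> (\<forall>i j k. lam (i - 1) j k = (lam i j k \<noteq> lam i (j - 1) k))"

definition lam1 :: "int \<Rightarrow> int \<Rightarrow> int \<Rightarrow> bool" where "lam1 i j k = cb i (k + j)"
definition lam2 :: "int \<Rightarrow> int \<Rightarrow> int \<Rightarrow> bool" where "lam2 i j k = cb j (k + i)"
definition lam3 :: "int \<Rightarrow> int \<Rightarrow> int \<Rightarrow> bool" where "lam3 i j k = cb i (k - i - j)"

lemma lamrel1: "lamrel lam1"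
  unfolding lamrel_def lam1_def
proof (intro allI)
  fix i j k
  show "cb (i - 1) (k + j) = (cb i (k + j) \<noteq> cb i (k + (j - 1)))"
    using cb_rec[of i "k + j"] by (simp add: algebra_simps)
qed

lemma lamrel2: "lamrel lam2"
  unfolding lamrel_def lam2_def
proof (intro allI)
  fix i j k
  show "cb j (k + (i - 1)) = (cb j (k + i) \<noteq> cb (j - 1) (k + i))"
    using cb_rec[of j "k + i"] by (auto simp: algebra_simps)
qed

lemma lamrel3: "lamrel lam3"
  unfolding lamrel_def lam3_def
proof (intro allI)
  fix i j k
  have "cb (i - 1) (k - i - j + 1) = (cb i (k - i - j + 1) \<noteq> cb i (k - i - j))"
    using cb_rec[of i "k - i - j + 1"] by simp
  then show "cb (i - 1) (k - (i - 1) - j) = (cb i (k - i - j) \<noteq> cb i (k - i - (j - 1)))"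
    by (auto simp: algebra_simps)
qed

type_synonym state = "(int \<times> int) \<times> (int \<Rightarrow> bool)"

definition stp :: "(int \<Rightarrow> int \<Rightarrow> int \<Rightarrow> bool) \<Rightarrow> letter \<Rightarrow> state \<Rightarrow> state" where
  "stp lam l s = (if fst l = A then (fst s, \<lambda>k. snd s k \<noteq> lam (fst (fst s)) (snd (fst s)) k)
                  else (padd (fst s) (dlt l), snd s))"

definition run :: "(int \<Rightarrow> int \<Rightarrow> int \<Rightarrow> bool) \<Rightarrow> word \<Rightarrow> state \<Rightarrow> state" where
  "run lam w s = fold (stp lam) w s"

lemma run_append: "run lam (u @ v) s = run lam v (run lam u s)"
  by (simp add: run_def)
lemma run_Nil[simp]: "run lam [] s = s" by (simp add: run_def)
lemma run_Cons: "run lam (x # w) s = run lam w (stp lam x s)" by (simp add: run_def)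

lemma run_cancel: "run lam [x, linv x] s = s"
  by (cases s; cases x; cases "fst x") (auto simp: run_def stp_def linv_def padd_def fun_eq_iff)

lemma run_rel:
  assumes "lamrel lam" "r \<in> relators" shows "run lam r s = s"
proof -
  obtain i j F where s: "s = ((i, j), F)" by (metis prod.collapse)
  have R: "lam (i - 1) j k = (lam i j k \<noteq> lam i (j - 1) k)" for k using assms(1) unfolding lamrel_def by blast
  have r1: "run lam (ga @ ga) s = s" using s by (auto simp: run_def stp_def ga_def fun_eq_iff)
  have r2: "run lam (comm ga (conj ga gt)) s = s"
    using s by (auto simp: run_def stp_def ga_def gt_def comm_def conj_def winv_def linv_def padd_def fun_eq_iff)
  have r3: "run lam (comm gs gt) s = s"
    using s by (simp add: run_def stp_def gs_def gt_def comm_def winv_def linv_def padd_def)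
  have r4: "run lam (conj ga gs @ winv (ga @ conj ga gt)) s = s"
    using s R by (auto simp: run_def stp_def ga_def gs_def gt_def conj_def winv_def linv_def padd_def fun_eq_iff)
  show ?thesis using assms(2) r1 r2 r3 r4 unfolding relators_def by blast
qed

lemma run_geq: assumes "lamrel lam" shows "geq u v \<Longrightarrow> run lam u s = run lam v s"
proof (induction arbitrary: s rule: geq.induct)
  case (geq_cancel u x v)
  have "run lam (u @ [x, linv x] @ v) s = run lam v (run lam [x, linv x] (run lam u s))" by (simp only: run_append)
  then show ?case using run_cancel[of lam x] by (simp only: run_append)
next
  case (geq_rel r u v)
  have "run lam (u @ r @ v) s = run lam v (run lam r (run lam u s))" by (simp only: run_append)
  then show ?case using run_rel[OF assms geq_rel] by (simp only: run_append)
qed auto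

lemma run_pos: "fst (run lam w (p, F)) = wend p w"
proof (induction w arbitrary: p F)
  case Nil then show ?case by simp
next
  case (Cons x w)
  show ?case
  proof (cases "fst x = A")
    case True
    then have "dlt x = (0, 0)" by (cases x) auto
    then show ?thesis using Cons True by (simp add: run_Cons stp_def padd_def)
  next
    case False
    then have "run lam (x # w) (p, F) = run lam w (padd p (dlt x), F)" by (simp add: run_Cons stp_def)
    then show ?thesis using Cons.IH[of "padd p (dlt x)" F] by simp
  qed
qed

lemma walkpos_Cons_sub: "set (walkpos (padd p (dlt x)) w) \<subseteq> set (walkpos p (x # w))"
  by auto

lemma run_lamp: "snd (run lam w (p, F)) k \<noteq> F k \<Longrightarrow> \<exists>q\<in>set (walkpos p w). lam (fst q) (snd q) k"
proof (induction w arbitrary: p F)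
  case Nil then show ?case by simp
next
  case (Cons x w)
  have pin: "p \<in> set (walkpos p (x # w))" by simp
  show ?case
  proof (cases "fst x = A")
    case True
    then have dx: "padd p (dlt x) = p" by (cases x) (auto simp: padd_def)
    define G where "G = (\<lambda>k. F k \<noteq> lam (fst p) (snd p) k)"
    have r: "run lam (x # w) (p, F) = run lam w (p, G)" using True by (simp add: run_Cons stp_def G_def)
    show ?thesis
    proof (cases "lam (fst p) (snd p) k")
      case True then show ?thesis using pin by blast
    next
      case False
      then have "snd (run lam w (p, G)) k \<noteq> G k" using Cons.prems r by (simp add: G_def)
      then have "\<exists>q\<in>set (walkpos p w). lam (fst q) (snd q) k" by (rule Cons.IH)
      then show ?thesis using walkpos_Cons_sub[of p x w] unfolding dx by blast
    qed
  next
    case False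
    then have "run lam (x # w) (p, F) = run lam w (padd p (dlt x), F)" by (simp add: run_Cons stp_def)
    then have "snd (run lam w (padd p (dlt x), F)) k \<noteq> F k" using Cons.prems by simp
    then have "\<exists>q\<in>set (walkpos (padd p (dlt x)) w). lam (fst q) (snd q) k" by (rule Cons.IH)
    then show ?thesis using walkpos_Cons_sub[of p x w] by blast
  qed
qed



lemma concat_rep1: "concat (replicate m [x]) = replicate m x"
  by (induction m) auto

lemma run_rep: "isST l \<Longrightarrow> run lam (replicate m l) (p, F) = (wend p (replicate m l), F)"
proof (induction m arbitrary: p)
  case 0 then show ?case by simp
next
  case (Suc m)
  then have "fst l \<noteq> A" by (simp add: isST_def)
  then show ?case using Suc by (simp add: run_Cons stp_def)
qed

lemma run_A: "run lam [(A, False)] (p, F) = (p, \<lambda>k. F k \<noteq> lam (fst p) (snd p) k)"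
  by (simp add: run_def stp_def)

lemma gn_word: "gn n = replicate n (S, False) @ [(A, False)] @ replicate n (S, True) @ replicate n (T, False) @ [(A, False)]
   @ replicate (2 * n) (T, True) @ [(A, False)] @ replicate n (T, False)"
proof -
  have "nat (- (- 2 * int n)) = 2 * n" by simp
  then show ?thesis
    by (simp add: gn_def wpow_def gs_def gt_def ga_def winv_def linv_def concat_rep1)
qed

lemma run_gn: "run lam (gn n) ((0,0), F) =
  ((0,0), \<lambda>k. (((F k \<noteq> lam (int n) 0 k) \<noteq> lam 0 (int n) k) \<noteq> lam 0 (- int n) k))"
  by (simp add: gn_word run_append run_rep isST_def wend_rep run_Cons stp_def)

definition cnt :: "gen \<Rightarrow> word \<Rightarrow> nat" where "cnt g w = length (filter (\<lambda>l. fst l = g) w)"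

lemma cnt_append: "cnt g (u @ v) = cnt g u + cnt g v" by (simp add: cnt_def)

lemma seg_S: "\<bar>fst (wend p w) - fst p\<bar> \<le> int (cnt S w)"
proof (induction w arbitrary: p)
  case Nil then show ?case by (simp add: cnt_def)
next
  case (Cons x w)
  have "\<bar>fst (wend (padd p (dlt x)) w) - fst (padd p (dlt x))\<bar> \<le> int (cnt S w)" by (rule Cons.IH)
  moreover have "\<bar>fst (dlt x)\<bar> \<le> (if fst x = S then 1 else 0)" by (cases x; cases "fst x") auto
  ultimately show ?case by (auto simp: cnt_def padd_def split: if_splits)
qed

lemma seg_T: "\<bar>snd (wend p w) - snd p\<bar> \<le> int (cnt T w)"
proof (induction w arbitrary: p)
  case Nil then show ?case by (simp add: cnt_def)
next
  case (Cons x w)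
  have "\<bar>snd (wend (padd p (dlt x)) w) - snd (padd p (dlt x))\<bar> \<le> int (cnt T w)" by (rule Cons.IH)
  moreover have "\<bar>snd (dlt x)\<bar> \<le> (if fst x = T then 1 else 0)" by (cases x; cases "fst x") auto
  ultimately show ?case by (auto simp: cnt_def padd_def split: if_splits)
qed

lemma walk_split: "q \<in> set (walkpos p w) \<Longrightarrow> \<exists>w1 w2. w = w1 @ w2 \<and> wend p w1 = q"
proof (induction w arbitrary: p)
  case Nil then show ?case by auto
next
  case (Cons x w)
  show ?case
  proof (cases "q = p")
    case True then show ?thesis by (intro exI[of _ "[]"] exI[of _ "x # w"]) simp
  next
    case False
    then have "q \<in> set (walkpos (padd p (dlt x)) w)" using Cons.prems by simp
    then obtain w1 w2 where "w = w1 @ w2" "wend (padd p (dlt x)) w1 = q" using Cons.IH by blast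
    then show ?thesis by (intro exI[of _ "x # w1"] exI[of _ w2]) auto
  qed
qed

lemma two_points:
  fixes f :: "int \<times> int \<Rightarrow> int" and c :: "word \<Rightarrow> nat"
  assumes seg: "\<And>p w. \<bar>f (wend p w) - f p\<bar> \<le> int (c w)"
    and capp: "\<And>u v. c (u @ v) = c u + c v"
    and closed: "wend p w = p" and r: "r \<in> set (walkpos p w)" and r': "r' \<in> set (walkpos p w)"
  shows "2 * \<bar>f r - f r'\<bar> \<le> int (c w)"
proof -
  obtain w1 w2 where w: "w = w1 @ w2" "wend p w1 = r" using walk_split[OF r] by blast
  have e2: "wend r w2 = p" using closed w by (simp add: wend_append)
  have "r' \<in> set (walkpos p w1) \<or> r' \<in> set (walkpos r w2)" using r' w by (simp add: walkpos_append)
  then show ?thesis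
  proof
    assume "r' \<in> set (walkpos p w1)"
    then obtain u1 u2 where u: "w1 = u1 @ u2" "wend p u1 = r'" using walk_split by blast
    have "wend r' u2 = r" using u w by (simp add: wend_append)
    then have "\<bar>f r - f r'\<bar> \<le> int (c u2)" using seg[of r' u2] by simp
    moreover have "\<bar>f r' - f p\<bar> \<le> int (c u1)" using seg[of p u1] u by simp
    moreover have "\<bar>f p - f r\<bar> \<le> int (c w2)" using seg[of r w2] e2 by simp
    moreover have "int (c w) = int (c u1) + int (c u2) + int (c w2)" using w u capp by simp
    moreover have "\<bar>f r - f r'\<bar> \<le> \<bar>f r' - f p\<bar> + \<bar>f p - f r\<bar>" by arith
    ultimately show ?thesis by (smt (verit))
  next
    assume "r' \<in> set (walkpos r w2)"
    then obtain v1 v2 where v: "w2 = v1 @ v2" "wend r v1 = r'" using walk_split by blast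
    have "wend r' v2 = p" using v e2 by (simp add: wend_append)
    then have "\<bar>f p - f r'\<bar> \<le> int (c v2)" using seg[of r' v2] by simp
    moreover have "\<bar>f r' - f r\<bar> \<le> int (c v1)" using seg[of r v1] v by simp
    moreover have "\<bar>f r - f p\<bar> \<le> int (c w1)" using seg[of p w1] w by simp
    moreover have "int (c w) = int (c w1) + int (c v1) + int (c v2)" using w v capp by simp
    moreover have "\<bar>f r - f r'\<bar> \<le> \<bar>f p - f r'\<bar> + \<bar>f r - f p\<bar>" by arith
    ultimately show ?thesis by (smt (verit))
  qed
qed

lemma cnt_evalA: "cnt S (evalA ws) + cnt T (evalA ws) \<le> length ws"
proof (induction ws)
  case Nil then show ?case by (simp add: evalA_def cnt_def)
next
  case (Cons x ws)
  have e: "evalA (x # ws) = evalA [x] @ evalA ws" by (simp add: evalA_def)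
  obtain g b where x: "x = (g, b)" by fastforce
  have "cnt S (evalA [x]) + cnt T (evalA [x]) \<le> 1"
    using x by (cases g; cases b) (auto simp: evalA_def cnt_def ga_def gs_def gt_def winv_def linv_def)
  then show ?case using Cons e by (simp add: cnt_append)
qed

lemma cb_nonneg: "cb i m \<Longrightarrow> m \<ge> 0" by (simp add: cb_def)

lemma lower:
  assumes n: "n \<ge> 1" and g: "geq (evalA ws) (gn n)"
  shows "length ws \<ge> 6 * n"
proof -
  let ?w = "evalA ws"
  let ?s0 = "((0::int, 0::int), \<lambda>k::int. False)"
  have eq: "\<And>lam. lamrel lam \<Longrightarrow> run lam ?w ?s0 = run lam (gn n) ?s0" using run_geq g by blast
  have "fst (run lam1 ?w ?s0) = (0,0)" using eq[OF lamrel1] run_gn[of lam1 n] by simp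
  then have closed: "wend (0,0) ?w = (0,0)" using run_pos[of lam1 ?w "(0,0)"] by simp
  have v1: "snd (run lam1 ?w ?s0) (- int n)" using eq[OF lamrel1] run_gn[of lam1 n] n
    by (simp add: lam1_def cb_def)
  obtain P1 where P1: "P1 \<in> set (walkpos (0,0) ?w)" "lam1 (fst P1) (snd P1) (- int n)"
    using run_lamp[of lam1 ?w "(0,0)" "\<lambda>k. False" "- int n"] v1 by auto
  have v2: "snd (run lam2 ?w ?s0) (- int n)" using eq[OF lamrel2] run_gn[of lam2 n] n
    by (simp add: lam2_def cb_def)
  obtain P2 where P2: "P2 \<in> set (walkpos (0,0) ?w)" "lam2 (fst P2) (snd P2) (- int n)"
    using run_lamp[of lam2 ?w "(0,0)" "\<lambda>k. False" "- int n"] v2 by auto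
  have v3: "snd (run lam3 ?w ?s0) (- int n)" using eq[OF lamrel3] run_gn[of lam3 n] n
    by (simp add: lam3_def cb_def)
  obtain P3 where P3: "P3 \<in> set (walkpos (0,0) ?w)" "lam3 (fst P3) (snd P3) (- int n)"
    using run_lamp[of lam3 ?w "(0,0)" "\<lambda>k. False" "- int n"] v3 by auto
  have b1: "snd P1 \<ge> int n" using cb_nonneg P1(2) by (force simp: lam1_def)
  have b2: "fst P2 \<ge> int n" using cb_nonneg P2(2) by (force simp: lam2_def)
  have b3: "fst P3 + snd P3 \<le> - int n" using cb_nonneg P3(2) by (force simp: lam3_def)
  have cS: "2 * \<bar>fst P2 - fst P3\<bar> \<le> int (cnt S ?w)"
    by (rule two_points[where f=fst and c="cnt S", OF seg_S cnt_append closed P2(1) P3(1)])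
  have cT: "2 * \<bar>snd P1 - snd P3\<bar> \<le> int (cnt T ?w)"
    by (rule two_points[where f=snd and c="cnt T", OF seg_T cnt_append closed P1(1) P3(1)])
  have "cnt S ?w + cnt T ?w \<le> length ws" by (rule cnt_evalA)
  then have "int (cnt S ?w) + int (cnt T ?w) \<le> int (length ws)" by linarith
  moreover have "fst P2 - fst P3 \<le> \<bar>fst P2 - fst P3\<bar>" "snd P1 - snd P3 \<le> \<bar>snd P1 - snd P3\<bar>" by simp_all
  moreover have "int (6 * n) = 6 * int n" by simp
  ultimately have "int (6 * n) \<le> int (length ws)" using cS cT b1 b2 b3 by (smt (verit))
  then show ?thesis by linarith
qed

lemma far:
  assumes g: "geq (evalA ws) (replicate m (T, False))"
  shows "length ws \<ge> m"
proof -
  let ?w = "evalA ws"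
  have "run lam1 ?w ((0,0), \<lambda>k. False) = run lam1 (replicate m (T, False)) ((0,0), \<lambda>k. False)"
    using run_geq[OF lamrel1 g] by blast
  then have "fst (run lam1 ?w ((0,0), \<lambda>k. False)) = (0, int m)"
    using run_rep[of "(T, False)" lam1 m "(0,0)"] by (simp add: isST_def wend_rep)
  then have "wend (0,0) ?w = (0, int m)" using run_pos[of lam1 ?w "(0,0)"] by simp
  then have "int m \<le> int (cnt T ?w)" using seg_T[of "(0,0)" ?w] by simp
  moreover have "cnt S ?w + cnt T ?w \<le> length ws" by (rule cnt_evalA)
  ultimately show ?thesis by linarith
qed



fun tog :: "letter \<Rightarrow> agen \<times> bool" where
  "tog (A, b) = (Ga, b)" | "tog (S, b) = (Gs, b)" | "tog (T, b) = (Gt, b)"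

lemma evalA_tog: "evalA (map tog u) = u"
proof (induction u)
  case Nil then show ?case by (simp add: evalA_def)
next
  case (Cons x u)
  have e: "evalA (tog x # map tog u) = evalA [tog x] @ evalA (map tog u)" by (simp add: evalA_def)
  have "evalA [tog x] = [x]"
    by (cases x; cases "fst x"; cases "snd x") (auto simp: evalA_def ga_def gs_def gt_def winv_def linv_def)
  then show ?case using e Cons by simp
qed

lemma dA_ex: "\<exists>ws. length ws = dA g h \<and> geq (evalA ws) (winv g @ h)"
proof -
  have "geq (evalA (map tog (winv g @ h))) (winv g @ h)" unfolding evalA_tog by (rule geq_refl)
  then have "\<exists>k ws. length ws = k \<and> geq (evalA ws) (winv g @ h)" by blast
  then show ?thesis unfolding dA_def by (rule LeastI_ex)
qed

lemma dA_le: assumes "length ws \<le> k" "geq (evalA ws) (winv g @ h)" shows "dA g h \<le> k"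
proof -
  have "dA g h \<le> length ws" unfolding dA_def by (rule Least_le) (use assms(2) in blast)
  then show ?thesis using assms(1) by simp
qed

lemma dA_ge: assumes "\<And>ws. geq (evalA ws) (winv g @ h) \<Longrightarrow> length ws \<ge> m" shows "dA g h \<ge> m"
proof -
  obtain ws where "length ws = dA g h" "geq (evalA ws) (winv g @ h)" using dA_ex by blast
  then show ?thesis using assms by force
qed

lemma part2:
  assumes n: "n \<ge> 1" and d: "dA (gn n) h \<le> n"
  shows "dA [] h \<le> 6 * n"
proof -
  obtain ws where ws: "length ws = dA (gn n) h" "geq (evalA ws) (winv (gn n) @ h)" using dA_ex by blast
  have "abs_grp (evalA ws) = abs_grp (winv (gn n) @ h)" using ws(2) abs_eq_iff by blast
  then have a: "abs_grp (evalA ws) = - abs_grp (gn n) + abs_grp h" by (simp add: abs_app abs_winv)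
  obtain ws' where w': "length ws' \<le> 6 * n" "abs_grp (evalA ws') = abs_grp (gn n) + abs_grp (evalA ws)"
    using upper[OF n, of ws] ws(1) d by auto
  have "abs_grp (evalA ws') = abs_grp h" using w'(2) a by (simp add: add.assoc)
  then have "geq (evalA ws') (winv [] @ h)" using abs_eq_iff by simp
  then show ?thesis using dA_le w'(1) by blast
qed

theorem mainTheorem7:
  fixes n :: nat
  assumes "n \<ge> 1"
  shows "dA [] (gn n) = 6 * n
         \<and> (\<forall>h. dA [] h > 6 * n \<longrightarrow> dA (gn n) h > n)
         \<and> depth (gn n) \<ge> n"
proof -
  have n: "n \<ge> 1" by (rule assms)
  have up: "dA [] (gn n) \<le> 6 * n"
  proof -
    obtain ws' where w': "length ws' \<le> 6 * n" "abs_grp (evalA ws') = abs_grp (gn n) + abs_grp (evalA [])"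
      using upper[OF n, of "[]"] by auto
    then have "abs_grp (evalA ws') = abs_grp (gn n)" by (simp add: gv_Nil)
    then have "geq (evalA ws') (winv [] @ gn n)" using abs_eq_iff by simp
    then show ?thesis using dA_le w'(1) by blast
  qed
  have lo: "dA [] (gn n) \<ge> 6 * n"
    by (rule dA_ge) (use lower[OF n] in simp)
  have P1: "dA [] (gn n) = 6 * n" using up lo by simp
  have P2: "\<forall>h. dA [] h > 6 * n \<longrightarrow> dA (gn n) h > n"
    using part2[OF n] not_le by blast
  define h0 where "h0 = replicate (6 * n + 1) (T, False)"
  have h0: "dA [] h0 > dA [] (gn n)"
  proof -
    have "dA [] h0 \<ge> 6 * n + 1" by (rule dA_ge) (use far in \<open>simp add: h0_def\<close>)
    then show ?thesis using P1 by simp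
  qed
  have "\<exists>h. dA [] h > dA [] (gn n) \<and> dA (gn n) h = depth (gn n)"
    unfolding depth_def by (rule LeastI_ex) (use h0 in blast)
  then obtain h where h: "dA [] h > dA [] (gn n)" "dA (gn n) h = depth (gn n)" by blast
  have "n < dA (gn n) h" using P2 h(1) P1 by simp
  then have "depth (gn n) > n" using h(2) by simp
  then have P3: "depth (gn n) \<ge> n" by simp
  show ?thesis using P1 P2 P3 by blast
qed


end
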